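(* Let $n\ge 3$, $\delta>0$, and let $F\subset C^2([0,1]^{n-1})$ be a cinematic family (with cinematic constant $K$, doubling constant $D$ and modulus of continuity $\alpha$). Then for any $f,g\in F$ with $\|f-g\|_{C^2([0,1]^{n-1})}\in[\delta,1]$, $$\mathcal{L}^n(f^\delta\cap g^\delta)\lesssim\frac{\delta^2}{\|f-g\|_{C^2([0,1]^{n-1})}},$$ where the implicit constant depends only on $n$ and the parameters $K,D,\alpha$ of $F$.
   Context: $\mathcal{L}^n$ is Lebesgue measure on $\mathbb{R}^n$. For $f\in C^2([0,1]^{n-1})$ and $\delta>0$, the vertical $\delta$-neighborhood is $f^\delta:=\{(x,y)\in[0,1]^{n-1}\times\mathbb{R}: f(x)-\delta\le y\le f(x)+\delta\}$. Cinematic family: for a domain $U\subset\mathbb{R}^k$, $F\subset C^2(U)$ (metric from the usual $C^2(U)$ norm) is a cinematic family with cinematic constant $K$, doubling constant $D$ and modulus of continuity $\alpha$ if: (1) $F$ lies in a ball of diameter $K$ in $C^2(U)$; (2) $F$ is doubling with constant at most $D$; (3) for all $f,g\in F$ and $\xi\in S^{k-1}$, $\inf_{x\in U}\{|f-g|(x)+|\nabla f-\nabla g|(x)+|\nabla_\xi\nabla_\xi(f-g)(x)|\}\ge K^{-1}\|f-g\|_{C^2(U)}$, where $\nabla_\xi\nabla_\xi h=\langle\nabla^2h\,\xi,\xi\rangle$; (4) there is an increasing continuous $\alpha:[0,1]\to[0,\infty)$, $\alpha(0)=0$, $0<\alpha(s)\le K^{-1}s$ for $s\in(0,1]$, such that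 for all $f,g\in F$, $\xi\in S^{k-1}$, sufficiently small $\eta>0$ and $x,y\in U$ with $|x-y|\le\alpha(\eta)$: $|\nabla_\xi\nabla_\xi(f-g)(x)-\nabla_\xi\nabla_\xi(f-g)(y)|\le\eta$. *)

theory Defs
  imports "HOL-Analysis.Analysis"
begin

text \<open>The closed unit cube [0,1]^(n-1), realised in a Euclidean space 'a of dimension n-1.\<close>
definition unit_cube :: "'a::euclidean_space set" where
  "unit_cube = cbox 0 One"

definition grad_on :: "'a::euclidean_space set \<Rightarrow> ('a \<Rightarrow> real) \<Rightarrow> 'a \<Rightarrow> 'a" where
  "grad_on U h x = (SOME v. (h has_derivative (\<lambda>u. v \<bullet> u)) (at x within U))"

definition hess_on :: "'a::euclidean_space set \<Rightarrow> ('a \<Rightarrow> real) \<Rightarrow> 'a \<Rightarrow> 'a \<Rightarrow> 'a" where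
  "hess_on U h x = (SOME L. (grad_on U h has_derivative L) (at x within U))"

definition C2_on :: "'a::euclidean_space set \<Rightarrow> ('a \<Rightarrow> real) \<Rightarrow> bool" where
  "C2_on U h \<longleftrightarrow>
     (\<forall>x\<in>U. (h has_derivative (\<lambda>u. grad_on U h x \<bullet> u)) (at x within U)) \<and>
     (\<forall>x\<in>U. (grad_on U h has_derivative hess_on U h x) (at x within U)) \<and>
     (\<forall>i\<in>Basis. continuous_on U (\<lambda>x. hess_on U h x i))"

definition C2_norm :: "'a::euclidean_space set \<Rightarrow> ('a \<Rightarrow> real) \<Rightarrow> real" where
  "C2_norm U h = (SUP x\<in>U. \<bar>h x\<bar>) + (SUP x\<in>U. norm (grad_on U h x)) + (SUP x\<in>U. onorm (hess_on U h x))"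

definition C2_dist :: "'a::euclidean_space set \<Rightarrow> ('a \<Rightarrow> real) \<Rightarrow> ('a \<Rightarrow> real) \<Rightarrow> real" where
  "C2_dist U f g = C2_norm U (\<lambda>x. f x - g x)"

definition dd2 :: "'a::euclidean_space set \<Rightarrow> ('a \<Rightarrow> real) \<Rightarrow> 'a \<Rightarrow> 'a \<Rightarrow> real" where
  "dd2 U h \<xi> x = hess_on U h x \<xi> \<bullet> \<xi>"

definition doubling_C2 :: "'a::euclidean_space set \<Rightarrow> ('a \<Rightarrow> real) set \<Rightarrow> real \<Rightarrow> bool" where
  "doubling_C2 U F D \<longleftrightarrow>
     (\<forall>f\<in>F. \<forall>r>0. \<exists>S. finite S \<and> S \<subseteq> F \<and> real (card S) \<le> D \<and>
        {g\<in>F. C2_dist U f g < r} \<subseteq> (\<Union>s\<in>S. {g. C2_dist U s g < r / 2}))"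

definition cinematic :: "'a::euclidean_space set \<Rightarrow> ('a \<Rightarrow> real) set \<Rightarrow> real \<Rightarrow> real \<Rightarrow> (real \<Rightarrow> real) \<Rightarrow> bool" where
  "cinematic U F K D \<alpha> \<longleftrightarrow>
     K > 0 \<and>
     (\<forall>f\<in>F. C2_on U f) \<and>
     \<comment> \<open>(1) F lies in a ball of diameter K in C^2(U)\<close>
     (\<exists>h0. C2_on U h0 \<and> (\<forall>f\<in>F. C2_dist U f h0 \<le> K / 2)) \<and>
     \<comment> \<open>(2) doubling\<close>
     doubling_C2 U F D \<and>
     \<comment> \<open>(3) cinematic condition\<close>
     (\<forall>f\<in>F. \<forall>g\<in>F. \<forall>\<xi>. norm \<xi> = 1 \<longrightarrow>
        (INF x\<in>U. \<bar>f x - g x\<bar> + norm (grad_on U (\<lambda>z. f z - g z) x)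
                   + \<bar>dd2 U (\<lambda>z. f z - g z) \<xi> x\<bar>) \<ge> inverse K * C2_dist U f g) \<and>
     \<comment> \<open>(4) modulus of continuity\<close>
     (mono_on {0..1} \<alpha> \<and> continuous_on {0..1} \<alpha> \<and> \<alpha> 0 = 0 \<and>
      (\<forall>s\<in>{0<..1}. 0 < \<alpha> s \<and> \<alpha> s \<le> inverse K * s) \<and>
      (\<forall>f\<in>F. \<forall>g\<in>F. \<forall>\<xi>. norm \<xi> = 1 \<longrightarrow> (\<forall>\<eta>\<in>{0<..1}. \<forall>x\<in>U. \<forall>y\<in>U.
          norm (x - y) \<le> \<alpha> \<eta> \<longrightarrow>
          \<bar>dd2 U (\<lambda>z. f z - g z) \<xi> x - dd2 U (\<lambda>z. f z - g z) \<xi> y\<bar> \<le> \<eta>)))"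

definition vnbhd :: "'a::euclidean_space set \<Rightarrow> ('a \<Rightarrow> real) \<Rightarrow> real \<Rightarrow> ('a \<times> real) set" where
  "vnbhd U f \<delta> = {(x, y). x \<in> U \<and> f x - \<delta> \<le> y \<and> y \<le> f x + \<delta>}"

end

theory Submission
  imports Defs
begin

lemma mvt_lower:
  fixes \<phi> \<phi>' :: "real \<Rightarrow> real"
  assumes "a \<le> b"
    and der: "\<And>t. t \<in> {a..b} \<Longrightarrow> (\<phi> has_real_derivative \<phi>' t) (at t within {a..b})"
    and lo: "\<And>t. t \<in> {a..b} \<Longrightarrow> \<phi>' t \<ge> A"
  shows "\<phi> b - \<phi> a \<ge> A * (b - a)"
proof -
  have "\<exists>x\<in>{a..b}. \<phi> b - \<phi> a = (*) (\<phi>' x) (b - a)"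
    using assms(1) der
    by (intro mvt_very_simple) (auto simp: has_field_derivative_def)
  then obtain x where x: "x \<in> {a..b}" "\<phi> b - \<phi> a = (b - a) * \<phi>' x" by auto
  have "A * (b - a) \<le> \<phi>' x * (b - a)"
    using lo[OF x(1)] assms(1) by (intro mult_right_mono) auto
  then show ?thesis using x by (simp add: mult.commute)
qed

lemma convex1d:
  fixes \<phi> \<phi>' \<phi>'' :: "real \<Rightarrow> real"
  assumes d1: "\<And>t. t \<in> {0..1} \<Longrightarrow> (\<phi> has_real_derivative \<phi>' t) (at t within {0..1})"
    and d2: "\<And>t. t \<in> {0..1} \<Longrightarrow> (\<phi>' has_real_derivative \<phi>'' t) (at t within {0..1})"
    and lo: "\<And>t. t \<in> {0..1} \<Longrightarrow> \<phi>'' t \<ge> K0"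
    and s: "s \<in> {0..1}"
  shows "\<phi> s \<le> (1 - s) * \<phi> 0 + s * \<phi> 1 - K0 * s * (1 - s) / 2"
proof -
  define \<psi> where "\<psi> t = \<phi> t - K0 * t\<^sup>2 / 2" for t
  define \<psi>' where "\<psi>' t = \<phi>' t - K0 * t" for t
  have e1: "(\<psi> has_real_derivative \<psi>' t) (at t within {0..1})" if "t \<in> {0..1}" for t
    unfolding \<psi>_def \<psi>'_def using d1[OF that]
    by (auto intro!: derivative_eq_intros)
  have e2: "(\<psi>' has_real_derivative (\<phi>'' t - K0)) (at t within {0..1})" if "t \<in> {0..1}" for t
    unfolding \<psi>'_def using d2[OF that]
    by (auto intro!: derivative_eq_intros)
  have mono: "\<psi>' x \<le> \<psi>' y" if "0 \<le> x" "x \<le> y" "y \<le> 1" for x y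
  proof -
    have "\<psi>' y - \<psi>' x \<ge> 0 * (y - x)"
      using that
      by (intro mvt_lower[where \<phi>'="\<lambda>t. \<phi>'' t - K0"])
         (auto intro: DERIV_subset[OF e2] simp: lo)
    then show ?thesis by simp
  qed
  obtain x1 where x1: "x1 \<in> {0..s}" "\<psi> s - \<psi> 0 = \<psi>' x1 * (s - 0)"
  proof -
    have "\<exists>x\<in>{0..s}. \<psi> s - \<psi> 0 = (*) (\<psi>' x) (s - 0)"
      using s by (intro mvt_very_simple)
        (auto simp: has_field_derivative_def[symmetric] intro: DERIV_subset[OF e1])
    then show ?thesis using that by auto
  qed
  obtain x2 where x2: "x2 \<in> {s..1}" "\<psi> 1 - \<psi> s = \<psi>' x2 * (1 - s)"
  proof -
    have "\<exists>x\<in>{s..1}. \<psi> 1 - \<psi> s = (*) (\<psi>' x) (1 - s)"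
      using s by (intro mvt_very_simple)
        (auto simp: has_field_derivative_def[symmetric] intro: DERIV_subset[OF e1])
    then show ?thesis using that by auto
  qed
  have "\<psi>' x1 \<le> \<psi>' x2" using x1 x2 s by (intro mono) auto
  then have "(1 - s) * s * \<psi>' x1 \<le> (1 - s) * s * \<psi>' x2"
    using s by (intro mult_left_mono) auto
  moreover have "(1 - s) * (\<psi> s - \<psi> 0) = (1 - s) * s * \<psi>' x1"
    using x1(2) by simp
  moreover have "s * (\<psi> 1 - \<psi> s) = (1 - s) * s * \<psi>' x2"
    using x2(2) by simp
  ultimately have "(1 - s) * (\<psi> s - \<psi> 0) \<le> s * (\<psi> 1 - \<psi> s)"
    by linarith
  then have "\<psi> s \<le> (1 - s) * \<psi> 0 + s * \<psi> 1" by (simp add: algebra_simps)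
  then show ?thesis unfolding \<psi>_def by (simp add: algebra_simps power2_eq_square add_divide_distrib diff_divide_distrib)
qed

lemma seg_in:
  assumes "convex Q" "x \<in> Q" "y \<in> Q" "t \<in> {0..1::real}"
  shows "x + t *\<^sub>R (y - x) \<in> Q"
proof -
  have "(1 - t) *\<^sub>R x + t *\<^sub>R y \<in> Q"
    using assms by (intro convexD) auto
  moreover have "(1 - t) *\<^sub>R x + t *\<^sub>R y = x + t *\<^sub>R (y - x)"
    by (simp add: algebra_simps)
  ultimately show ?thesis by simp
qed

lemma seg_deriv:
  fixes u :: "'a::euclidean_space \<Rightarrow> real" and G :: "'a \<Rightarrow> 'a" and H :: "'a \<Rightarrow> 'a \<Rightarrow> 'a"
  assumes Q: "convex Q" "x \<in> Q" "y \<in> Q"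
    and D1: "\<And>z. z \<in> Q \<Longrightarrow> (u has_derivative (\<lambda>v. G z \<bullet> v)) (at z within Q)"
    and D2: "\<And>z. z \<in> Q \<Longrightarrow> (G has_derivative H z) (at z within Q)"
    and t: "t \<in> {0..1}"
  shows "((\<lambda>t. u (x + t *\<^sub>R (y - x))) has_real_derivative (G (x + t *\<^sub>R (y - x)) \<bullet> (y - x))) (at t within {0..1})"
    and "((\<lambda>t. G (x + t *\<^sub>R (y - x)) \<bullet> (y - x)) has_real_derivative (H (x + t *\<^sub>R (y - x)) (y - x) \<bullet> (y - x))) (at t within {0..1})"
proof -
  define \<gamma> where "\<gamma> t = x + t *\<^sub>R (y - x)" for t
  have img: "\<gamma> ` {0..1} \<subseteq> Q" using seg_in[OF Q] by (auto simp: \<gamma>_def)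
  have g: "(\<gamma> has_derivative (\<lambda>s. s *\<^sub>R (y - x))) (at t within {0..1})"
    unfolding \<gamma>_def by (auto intro!: derivative_eq_intros)
  have inQ: "\<gamma> t \<in> Q" using img t by auto
  have u1: "(u has_derivative (\<lambda>v. G (\<gamma> t) \<bullet> v)) (at (\<gamma> t) within \<gamma> ` {0..1})"
    using D1[OF inQ] img by (rule has_derivative_subset)
  have "((u \<circ> \<gamma>) has_derivative ((\<lambda>v. G (\<gamma> t) \<bullet> v) \<circ> (\<lambda>s. s *\<^sub>R (y - x)))) (at t within {0..1})"
    by (rule diff_chain_within[OF g u1])
  moreover have "((\<lambda>v. G (\<gamma> t) \<bullet> v) \<circ> (\<lambda>s. s *\<^sub>R (y - x))) = (*) (G (\<gamma> t) \<bullet> (y - x))"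
    by (auto simp: fun_eq_iff)
  ultimately show "((\<lambda>t. u (x + t *\<^sub>R (y - x))) has_real_derivative (G (x + t *\<^sub>R (y - x)) \<bullet> (y - x))) (at t within {0..1})"
    by (simp add: has_field_derivative_def \<gamma>_def o_def)
  have G1: "(G has_derivative H (\<gamma> t)) (at (\<gamma> t) within \<gamma> ` {0..1})"
    using D2[OF inQ] img by (rule has_derivative_subset)
  have lin: "linear (H (\<gamma> t))"
    using D2[OF inQ] has_derivative_linear by blast
  have "((G \<circ> \<gamma>) has_derivative (H (\<gamma> t) \<circ> (\<lambda>s. s *\<^sub>R (y - x)))) (at t within {0..1})"
    by (rule diff_chain_within[OF g G1])
  then have "((\<lambda>s. (G \<circ> \<gamma>) s \<bullet> (y - x)) has_derivative (\<lambda>s. (H (\<gamma> t) \<circ> (\<lambda>s. s *\<^sub>R (y - x))) s \<bullet> (y - x))) (at t within {0..1})"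
    by (rule has_derivative_inner_left)
  moreover have "(\<lambda>s. (H (\<gamma> t) \<circ> (\<lambda>s. s *\<^sub>R (y - x))) s \<bullet> (y - x)) = (*) (H (\<gamma> t) (y - x) \<bullet> (y - x))"
    using linear_scale[OF lin] by (auto simp: fun_eq_iff)
  ultimately show "((\<lambda>t. G (x + t *\<^sub>R (y - x)) \<bullet> (y - x)) has_real_derivative (H (x + t *\<^sub>R (y - x)) (y - x) \<bullet> (y - x))) (at t within {0..1})"
    by (simp add: has_field_derivative_def \<gamma>_def o_def)
qed

lemma pow_bound:
  fixes w :: real assumes "0 \<le> w" "w \<le> 1"
  shows "(1 + w) ^ n \<le> 1 + real n * 2 ^ n * w"
proof (induction n)
  case 0 then show ?case by simp
next
  case (Suc n)
  have "(1 + w) ^ Suc n = (1 + w) * (1 + w) ^ n" by simp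
  also have "\<dots> \<le> (1 + w) * (1 + real n * 2 ^ n * w)"
    using Suc assms by (intro mult_left_mono) auto
  also have "\<dots> = 1 + w + real n * 2 ^ n * w + real n * 2 ^ n * w * w" by (simp add: algebra_simps)
  also have "\<dots> \<le> 1 + w + real n * 2 ^ n * w + real n * 2 ^ n * w"
  proof -
    have "real n * 2 ^ n * w * w \<le> real n * 2 ^ n * w * 1"
      using assms by (intro mult_left_mono) auto
    then show ?thesis by linarith
  qed
  also have "\<dots> \<le> 1 + real (Suc n) * 2 ^ Suc n * w"
  proof -
    define Q where "Q = real n * 2 ^ n * w"
    define P where "P = 2 ^ n * w"
    have "w \<le> P" using assms unfolding P_def by (simp add: mult_le_cancel_right1 one_le_power)
    moreover have eq: "real (Suc n) * 2 ^ Suc n * w = 2 * Q + 2 * P"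
      unfolding P_def Q_def by (simp add: algebra_simps)
    ultimately show ?thesis using assms unfolding Q_def[symmetric] eq by linarith
  qed
  finally show ?case .
qed

lemma meas_cbox_le:
  fixes l u :: "'a::euclidean_space"
  assumes "\<And>i. i \<in> Basis \<Longrightarrow> (u - l) \<bullet> i \<le> c" "0 \<le> c"
  shows "measure lebesgue (cbox l u) \<le> c ^ DIM('a)"
proof -
  have "measure lebesgue (cbox l u) = measure lborel (cbox l u)"
    by (simp add: measure_completion)
  also have "\<dots> = (if \<forall>b\<in>Basis. l \<bullet> b \<le> u \<bullet> b then \<Prod>b\<in>Basis. (u - l) \<bullet> b else 0)"
    by (rule measure_lborel_cbox_eq)
  also have "\<dots> \<le> c ^ DIM('a)"
  proof (cases "\<forall>b\<in>Basis. l \<bullet> b \<le> u \<bullet> b")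
    case True
    have "(\<Prod>b\<in>Basis. (u - l) \<bullet> b) \<le> (\<Prod>b\<in>(Basis::'a set). c)"
      using True assms by (intro prod_mono) (auto simp: inner_diff_left)
    then show ?thesis using True by simp
  qed (use assms in auto)
  finally show ?thesis .
qed

lemma small_meas:
  fixes A :: "'a::euclidean_space set"
  assumes dim: "2 \<le> DIM('a)"
    and box: "\<And>i. i \<in> Basis \<Longrightarrow> hi \<bullet> i - lo \<bullet> i \<le> 1"
    and A: "A \<in> sets lebesgue" "A \<subseteq> cbox lo hi"
    and R: "\<And>y. y \<in> A \<Longrightarrow> norm (y - x0) \<le> R" "0 \<le> R"
  shows "measure lebesgue A \<le> 4 * R\<^sup>2"
proof -
  define l :: 'a where "l = (\<Sum>i\<in>Basis. max (lo\<bullet>i) ((x0 - R *\<^sub>R One)\<bullet>i) *\<^sub>R i)"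
  define u :: 'a where "u = (\<Sum>i\<in>Basis. min (hi\<bullet>i) ((x0 + R *\<^sub>R One)\<bullet>i) *\<^sub>R i)"
  have sub: "A \<subseteq> cbox l u"
  proof
    fix y assume y: "y \<in> A"
    have "y \<in> cbox (x0 - R *\<^sub>R One) (x0 + R *\<^sub>R One)"
    proof -
      have "\<bar>(y - x0) \<bullet> i\<bar> \<le> R" if i: "i \<in> Basis" for i
        using Basis_le_norm[OF i, of "y - x0"] R(1)[OF y] by linarith
      then show ?thesis by (auto simp: mem_box inner_diff_left abs_le_iff algebra_simps)
    qed
    with y A(2) show "y \<in> cbox l u" unfolding l_def u_def using Int_interval by blast
  qed
  have side: "(u - l) \<bullet> i \<le> min 1 (2 * R)" if "i \<in> Basis" for i
  proof -
    have "(u - l) \<bullet> i = min (hi\<bullet>i) (x0\<bullet>i + R) - max (lo\<bullet>i) (x0\<bullet>i - R)"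
      using that by (simp add: l_def u_def inner_diff_left inner_add_left inner_sum_left inner_Basis if_distrib cong: if_cong)
    then show ?thesis using box[OF that] by (simp add: min_def max_def)
  qed
  have "measure lebesgue A \<le> measure lebesgue (cbox l u)"
    using sub A(1) by (intro measure_mono_fmeasurable) auto
  also have "\<dots> \<le> (min 1 (2 * R)) ^ DIM('a)"
    using side R(2) by (intro meas_cbox_le) auto
  also have "\<dots> \<le> (min 1 (2 * R)) ^ 2"
    using dim R(2) by (intro power_decreasing) auto
  also have "\<dots> \<le> (2 * R) ^ 2"
    using R(2) by (intro power_mono) auto
  finally show ?thesis by (simp add: power2_eq_square)
qed

lemma convex_piece:
  fixes u :: "'a::euclidean_space \<Rightarrow> real" and G :: "'a \<Rightarrow> 'a" and H :: "'a \<Rightarrow> 'a \<Rightarrow> 'a"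
  assumes dim: "2 \<le> DIM('a)"
    and box: "\<And>i. i \<in> Basis \<Longrightarrow> lo \<bullet> i \<le> hi \<bullet> i \<and> hi \<bullet> i - lo \<bullet> i \<le> 1"
    and D1: "\<And>z. z \<in> cbox lo hi \<Longrightarrow> (u has_derivative (\<lambda>v. G z \<bullet> v)) (at z within cbox lo hi)"
    and D2: "\<And>z. z \<in> cbox lo hi \<Longrightarrow> (G has_derivative H z) (at z within cbox lo hi)"
    and cv: "\<And>z v. z \<in> cbox lo hi \<Longrightarrow> H z v \<bullet> v \<ge> k * (norm v)\<^sup>2"
    and k: "0 < k" and ab: "a < b"
  shows "measure lebesgue {x \<in> cbox lo hi. a \<le> u x \<and> u x \<le> b} \<le> real DIM('a) * 2 ^ (DIM('a) + 5) * (b - a) / k"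
proof -
  let ?Q = "cbox lo hi"
  let ?m = "DIM('a)"
  have cQ: "convex ?Q" "compact ?Q" by auto
  have ne: "?Q \<noteq> {}" using box by (auto simp: box_ne_empty)
  have cont: "continuous_on ?Q u"
    using D1 has_derivative_continuous continuous_on_eq_continuous_within by blast
  obtain x0 where x0: "x0 \<in> ?Q" "\<And>y. y \<in> ?Q \<Longrightarrow> u x0 \<le> u y"
    using continuous_attains_inf[OF cQ(2) ne cont] by auto
  define m0 where "m0 = u x0"
  have cvx: "u (z + s *\<^sub>R (y - z)) \<le> (1 - s) * u z + s * u y - k * (norm (y - z))\<^sup>2 * s * (1 - s) / 2"
    if "z \<in> ?Q" "y \<in> ?Q" "s \<in> {0..1}" for z y s
  proof -
    have "(\<lambda>t. u (z + t *\<^sub>R (y - z))) s \<le> (1 - s) * (\<lambda>t. u (z + t *\<^sub>R (y - z))) 0 + s * (\<lambda>t. u (z + t *\<^sub>R (y - z))) 1 - (k * (norm (y - z))\<^sup>2) * s * (1 - s) / 2"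
      apply (rule convex1d[where \<phi>' = "\<lambda>t. G (z + t *\<^sub>R (y - z)) \<bullet> (y - z)" and \<phi>'' = "\<lambda>t. H (z + t *\<^sub>R (y - z)) (y - z) \<bullet> (y - z)"])
      subgoal for t using seg_deriv(1)[OF cQ(1) that(1,2) D1 D2, of t] by simp
      subgoal for t using seg_deriv(2)[OF cQ(1) that(1,2) D1 D2, of t] by simp
      subgoal for t using cv[OF seg_in[OF cQ(1) that(1,2), of t], of "y - z"] by simp
      subgoal using that(3) .
      done
    then show ?thesis by simp
  qed
  have strong: "u y \<ge> m0 + k / 4 * (norm (y - x0))\<^sup>2" if "y \<in> ?Q" for y
  proof -
    have "m0 \<le> u (x0 + (1/2) *\<^sub>R (y - x0))"
      unfolding m0_def using x0 seg_in[OF cQ(1) x0(1) that, of "1/2"] by auto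
    also have "\<dots> \<le> (1 - 1/2) * u x0 + (1/2) * u y - k * (norm (y - x0))\<^sup>2 * (1/2) * (1 - 1/2) / 2"
      using cvx[OF x0(1) that, of "1/2"] by simp
    finally show ?thesis unfolding m0_def by (simp add: algebra_simps)
  qed
  define S where "S = {x \<in> ?Q. a \<le> u x \<and> u x \<le> b}"
  define Kb where "Kb = {x \<in> ?Q. u x \<le> b}"
  define Ka where "Ka = {x \<in> ?Q. u x < a}"
  define Kc where "Kc = {x \<in> ?Q. a \<le> u x}"
  have "compact (?Q \<inter> (?Q \<inter> u -` {a..b}))"
    by (intro compact_Int_closed cQ(2) continuous_closed_preimage[OF cont]) auto
  moreover have "?Q \<inter> (?Q \<inter> u -` {a..b}) = S" by (auto simp: S_def)
  ultimately have cS: "compact S" by simp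
  have "compact (?Q \<inter> (?Q \<inter> u -` {..b}))"
    by (intro compact_Int_closed cQ(2) continuous_closed_preimage[OF cont]) auto
  moreover have "?Q \<inter> (?Q \<inter> u -` {..b}) = Kb" by (auto simp: Kb_def)
  ultimately have cKb: "compact Kb" by simp
  have "compact (?Q \<inter> (?Q \<inter> u -` {a..}))"
    by (intro compact_Int_closed cQ(2) continuous_closed_preimage[OF cont]) auto
  moreover have "?Q \<inter> (?Q \<inter> u -` {a..}) = Kc" by (auto simp: Kc_def)
  ultimately have cKc: "compact Kc" by simp
  have Ka_eq: "Ka = ?Q - Kc" by (auto simp: Ka_def Kc_def)
  have mS: "S \<in> lmeasurable" using cS by (rule lmeasurable_compact)
  have mKb: "Kb \<in> lmeasurable" using cKb by (rule lmeasurable_compact)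
  have mKa: "Ka \<in> lmeasurable"
  proof -
    have s1: "Ka \<in> sets lebesgue" unfolding Ka_eq
      using lmeasurable_compact[OF cKc] lmeasurable_cbox by (intro sets.Diff) auto
    have s2: "Ka \<subseteq> ?Q" by (auto simp: Ka_def)
    show ?thesis by (rule fmeasurableI2[OF lmeasurable_cbox s2 s1])
  qed
  have SQ: "S \<subseteq> ?Q" by (auto simp: S_def)
  show ?thesis
  proof (cases "a - m0 < 2 * (b - a)")
    case True
    define R where "R = sqrt (12 * (b - a) / k)"
    have nR: "norm (y - x0) \<le> R" if "y \<in> S" for y
    proof -
      have "k / 4 * (norm (y - x0))\<^sup>2 \<le> 3 * (b - a)"
        using strong[of y] that True by (auto simp: S_def)
      then have "(norm (y - x0))\<^sup>2 \<le> 12 * (b - a) / k"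
        using k by (simp add: field_simps)
      then show ?thesis unfolding R_def by (rule real_le_rsqrt)
    qed
    have "measure lebesgue S \<le> 4 * R\<^sup>2"
    proof (rule small_meas[OF dim _ fmeasurableD[OF mS] SQ])
      show "\<And>i. i \<in> Basis \<Longrightarrow> hi \<bullet> i - lo \<bullet> i \<le> 1" using box by auto
      show "\<And>y. y \<in> S \<Longrightarrow> norm (y - x0) \<le> R" by (rule nR)
      show "0 \<le> R" using ab k by (auto simp: R_def)
    qed
    also have "\<dots> = 48 * (b - a) / k" unfolding R_def using ab k by simp
    also have "\<dots> \<le> real ?m * 2 ^ (?m + 5) * (b - a) / k"
    proof -
      have "(2::real) ^ 6 \<le> 2 ^ (?m + 5)" using dim by (intro power_increasing) auto
      then have "(48::real) \<le> 1 * 2 ^ (?m + 5)" by simp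
      also have "\<dots> \<le> real ?m * 2 ^ (?m + 5)" using dim by (intro mult_right_mono) auto
      finally show ?thesis using ab k by (intro divide_right_mono mult_right_mono) auto
    qed
    finally show ?thesis unfolding S_def .
  next
    case False
    define \<Delta> where "\<Delta> = a - m0"
    have \<Delta>: "2 * (b - a) \<le> \<Delta>" "0 < \<Delta>" using False ab by (auto simp: \<Delta>_def)
    define t where "t = \<Delta> / (\<Delta> + 2 * (b - a))"
    have t: "0 < t" "t \<le> 1" using \<Delta> ab by (auto simp: t_def)
    define T where "T y = t *\<^sub>R y + (1 - t) *\<^sub>R x0" for y
    have key: "(1 - t) * m0 + t * b < a"
    proof -
      have "(\<Delta> + (b - a)) / (\<Delta> + 2 * (b - a)) < 1" using \<Delta> ab by simp
      then have "\<Delta> * ((\<Delta> + (b - a)) / (\<Delta> + 2 * (b - a))) < \<Delta> * 1"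
        using \<Delta> by (intro mult_strict_left_mono) auto
      then have "t * (\<Delta> + (b - a)) < \<Delta>" by (simp add: t_def)
      then show ?thesis by (simp add: \<Delta>_def algebra_simps)
    qed
    have sub: "T ` Kb \<subseteq> Ka"
    proof
      fix z assume "z \<in> T ` Kb"
      then obtain y where y: "y \<in> Kb" "z = T y" by auto
      have Tz: "T y = x0 + t *\<^sub>R (y - x0)" by (simp add: T_def algebra_simps)
      have yQ: "y \<in> ?Q" using y by (auto simp: Kb_def)
      have inQ: "T y \<in> ?Q" unfolding Tz using seg_in[OF cQ(1) x0(1) yQ] t by auto
      have "u (T y) \<le> (1 - t) * u x0 + t * u y - k * (norm (y - x0))\<^sup>2 * t * (1 - t) / 2"
        unfolding Tz using cvx[OF x0(1) yQ, of t] t by auto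
      also have "\<dots> \<le> (1 - t) * m0 + t * b"
      proof -
        have "0 \<le> k * (norm (y - x0))\<^sup>2 * t * (1 - t) / 2" using k t by auto
        moreover have "t * u y \<le> t * b" using y t by (intro mult_left_mono) (auto simp: Kb_def)
        ultimately show ?thesis unfolding m0_def by linarith
      qed
      finally show "z \<in> Ka" using key inQ y(2) by (auto simp: Ka_def)
    qed
    have cT: "compact (T ` Kb)"
      using cKb by (intro compact_continuous_image) (auto simp: T_def intro!: continuous_intros)
    have "measure lebesgue (T ` Kb) = \<bar>t\<bar> ^ ?m * measure lebesgue Kb"
      unfolding T_def by (rule measure_lebesgue_affine)
    then have "t ^ ?m * measure lebesgue Kb \<le> measure lebesgue Ka"
      using measure_mono_fmeasurable[OF sub fmeasurableD[OF lmeasurable_compact[OF cT]] mKa] t by simp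
    then have Kb_le: "measure lebesgue Kb \<le> (1 / t) ^ ?m * measure lebesgue Ka"
      using t by (simp add: field_simps power_one_over)
    have disj: "Ka \<inter> S = {}" by (auto simp: Ka_def S_def)
    have "measure lebesgue (Ka \<union> S) = measure lebesgue Ka + measure lebesgue S"
      using mKa mS disj by (intro measure_Union) (auto simp: fmeasurable_def)
    moreover have "measure lebesgue (Ka \<union> S) \<le> measure lebesgue Kb"
      using mKa mS mKb ab by (intro measure_mono_fmeasurable) (auto simp: Ka_def S_def Kb_def)
    ultimately have S_le: "measure lebesgue S \<le> ((1 / t) ^ ?m - 1) * measure lebesgue Ka"
      using Kb_le by (simp add: algebra_simps)
    define w where "w = 2 * (b - a) / \<Delta>"
    have w: "0 \<le> w" "w \<le> 1" using \<Delta> ab by (auto simp: w_def)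
    have invt: "1 / t = 1 + w" using \<Delta> ab by (simp add: t_def w_def field_simps)
    define Ra where "Ra = sqrt (4 * \<Delta> / k)"
    have nRa: "norm (y - x0) \<le> Ra" if "y \<in> Ka" for y
    proof -
      have "k / 4 * (norm (y - x0))\<^sup>2 \<le> \<Delta>"
        using strong[of y] that by (auto simp: Ka_def \<Delta>_def)
      then have "(norm (y - x0))\<^sup>2 \<le> 4 * \<Delta> / k"
        using k by (simp add: field_simps)
      then show ?thesis unfolding Ra_def by (rule real_le_rsqrt)
    qed
    have "measure lebesgue Ka \<le> 4 * Ra\<^sup>2"
    proof (rule small_meas[OF dim _ fmeasurableD[OF mKa]])
      show "\<And>i. i \<in> Basis \<Longrightarrow> hi \<bullet> i - lo \<bullet> i \<le> 1" using box by auto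
      show "Ka \<subseteq> ?Q" by (auto simp: Ka_def)
      show "\<And>y. y \<in> Ka \<Longrightarrow> norm (y - x0) \<le> Ra" by (rule nRa)
      show "0 \<le> Ra" using \<Delta> k by (auto simp: Ra_def)
    qed
    also have "\<dots> = 16 * \<Delta> / k" unfolding Ra_def using \<Delta> k by simp
    finally have Ka_le: "measure lebesgue Ka \<le> 16 * \<Delta> / k" .
    have "(1 / t) ^ ?m - 1 \<le> real ?m * 2 ^ ?m * w"
      using pow_bound[OF w, of ?m] unfolding invt by simp
    then have "measure lebesgue S \<le> (real ?m * 2 ^ ?m * w) * measure lebesgue Ka"
      using S_le by (meson measure_nonneg mult_right_mono order_trans)
    also have "\<dots> \<le> (real ?m * 2 ^ ?m * w) * (16 * \<Delta> / k)"
      using Ka_le w by (intro mult_left_mono) auto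
    also have "\<dots> = real ?m * 2 ^ (?m + 5) * (b - a) / k"
      using \<Delta> k by (simp add: w_def field_simps power_add)
    finally show ?thesis unfolding S_def .
  qed
qed

lemma packing:
  fixes A :: "'a::euclidean_space set" and e lo :: 'a
  assumes A: "A \<in> sets lebesgue" "A \<subseteq> cbox lo (lo + r *\<^sub>R One)"
    and r: "0 < r" and \<tau>: "0 < \<tau>" and e: "norm e = 1"
    and sep: "\<And>x x' s. x \<in> A \<Longrightarrow> x' \<in> A \<Longrightarrow> \<tau> \<le> s \<Longrightarrow> x \<noteq> x' + s *\<^sub>R e"
  shows "measure lebesgue A \<le> 2 * 3 ^ DIM('a) * r ^ (DIM('a) - 1) * \<tau>"
proof -
  let ?m = "DIM('a)"
  have Afm: "A \<in> lmeasurable" by (rule fmeasurableI2[OF lmeasurable_cbox A(2) A(1)])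
  have rm: "r ^ ?m = r ^ (?m - 1) * r"
  proof -
    obtain n where n: "?m = Suc n" using DIM_positive[where 'a='a] not0_implies_Suc by blast
    show ?thesis unfolding n by simp
  qed
  have rpos: "0 \<le> r ^ (?m - 1)" using r by simp
  show ?thesis
  proof (cases "r < \<tau>")
    case True
    have "measure lebesgue A \<le> measure lebesgue (cbox lo (lo + r *\<^sub>R One))"
      using A Afm by (intro measure_mono_fmeasurable) auto
    also have "\<dots> \<le> r ^ ?m" using r by (intro meas_cbox_le) (auto simp: inner_diff_left inner_add_left)
    also have "\<dots> \<le> r ^ (?m - 1) * \<tau>" unfolding rm using True rpos by (intro mult_left_mono) auto
    also have "\<dots> \<le> 2 * 3 ^ ?m * r ^ (?m - 1) * \<tau>"
    proof -
      have "(1::real) \<le> 2 * 3 ^ ?m" using one_le_power[of "3::real" ?m] by linarith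
      then have "1 * (r ^ (?m - 1) * \<tau>) \<le> (2 * 3 ^ ?m) * (r ^ (?m - 1) * \<tau>)"
        using rpos \<tau> by (intro mult_right_mono) auto
      then show ?thesis by (simp add: mult.assoc)
    qed
    finally show ?thesis .
  next
    case False
    define N where "N = nat \<lfloor>r / \<tau>\<rfloor>"
    have rt: "1 \<le> r / \<tau>" using False \<tau> by simp
    have N1: "1 \<le> N" using rt by (simp add: N_def le_nat_floor)
    have NleR: "real N * \<tau> \<le> r"
    proof -
      have "real N \<le> r / \<tau>" using rt by (simp add: N_def)
      then show ?thesis using \<tau> by (simp add: field_simps)
    qed
    have Nge: "r / \<tau> \<le> 2 * real N"
    proof -
      have "r / \<tau> < real N + 1" using rt by (simp add: N_def)
      then show ?thesis using N1 by linarith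
    qed
    define B where "B p = (+) ((real p * \<tau>) *\<^sub>R e) ` A" for p :: nat
    have Bm: "B p \<in> lmeasurable" for p unfolding B_def by (rule measurable_translation[OF Afm])
    have Bmeas: "measure lebesgue (B p) = measure lebesgue A" for p
      unfolding B_def by (rule measure_translation)
    have disj: "disjoint_family_on B {..<N}"
    proof (unfold disjoint_family_on_def, intro ballI impI)
      fix p q assume "p \<in> {..<N}" "q \<in> {..<N}" "p \<noteq> q"
      show "B p \<inter> B q = {}"
      proof (rule ccontr)
        assume "B p \<inter> B q \<noteq> {}"
        then obtain x x' where xx: "x \<in> A" "x' \<in> A" "(real p * \<tau>) *\<^sub>R e + x = (real q * \<tau>) *\<^sub>R e + x'"
          by (auto simp: B_def)
        show False
        proof (cases "p < q")
          case True
          have "x = x' + (real (q - p) * \<tau>) *\<^sub>R e"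
            using xx(3) True by (simp add: of_nat_diff algebra_simps)
          moreover have "\<tau> \<le> real (q - p) * \<tau>" using True \<tau> by simp
          ultimately show False using sep[OF xx(1,2)] by blast
        next
          case False
          then have "q < p" using \<open>p \<noteq> q\<close> by simp
          have "x' = x + (real (p - q) * \<tau>) *\<^sub>R e"
            using xx(3) \<open>q < p\<close> by (simp add: of_nat_diff algebra_simps)
          moreover have "\<tau> \<le> real (p - q) * \<tau>" using \<open>q < p\<close> \<tau> by simp
          ultimately show False using sep[OF xx(2,1)] by blast
        qed
      qed
    qed
    have sub: "(\<Union>p\<in>{..<N}. B p) \<subseteq> cbox (lo - r *\<^sub>R One) (lo + (2 * r) *\<^sub>R One)"
    proof
      fix z assume "z \<in> (\<Union>p\<in>{..<N}. B p)"
      then obtain p x where px: "p < N" "x \<in> A" "z = (real p * \<tau>) *\<^sub>R e + x" by (auto simp: B_def)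
      have xb: "x \<in> cbox lo (lo + r *\<^sub>R One)" using px A by auto
      have pt: "0 \<le> real p * \<tau>" "real p * \<tau> \<le> r"
      proof -
        have "real p * \<tau> \<le> real N * \<tau>" using px(1) \<tau> by (intro mult_right_mono) auto
        then show "real p * \<tau> \<le> r" using NleR by linarith
        show "0 \<le> real p * \<tau>" using \<tau> by simp
      qed
      show "z \<in> cbox (lo - r *\<^sub>R One) (lo + (2 * r) *\<^sub>R One)"
        unfolding mem_box
      proof (intro ballI conjI)
        fix i :: 'a assume i: "i \<in> Basis"
        have ei: "\<bar>e \<bullet> i\<bar> \<le> 1" using Basis_le_norm[OF i, of e] e by simp
        have "\<bar>(real p * \<tau>) * (e \<bullet> i)\<bar> \<le> r"
        proof -
          have "\<bar>real p * \<tau>\<bar> * \<bar>e \<bullet> i\<bar> \<le> \<bar>real p * \<tau>\<bar> * 1"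
            using ei by (intro mult_left_mono) auto
          then show ?thesis using pt by (simp add: abs_mult)
        qed
        moreover have "lo \<bullet> i \<le> x \<bullet> i" "x \<bullet> i \<le> lo \<bullet> i + r"
          using xb i by (auto simp: mem_box inner_add_left)
        ultimately show "(lo - r *\<^sub>R One) \<bullet> i \<le> z \<bullet> i" "z \<bullet> i \<le> (lo + (2 * r) *\<^sub>R One) \<bullet> i"
          using i by (auto simp: px(3) inner_add_left inner_diff_left abs_le_iff)
      qed
    qed
    have "real N * measure lebesgue A = (\<Sum>p\<in>{..<N}. measure lebesgue (B p))"
      by (simp add: Bmeas)
    also have "\<dots> = measure lebesgue (\<Union>p\<in>{..<N}. B p)"
    proof (rule measure_finite_Union[symmetric])
      show "B ` {..<N} \<subseteq> sets lebesgue" using Bm by auto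
      show "emeasure lebesgue (B i) \<noteq> \<infinity>" if "i \<in> {..<N}" for i
        using fmeasurableD2[OF Bm[of i]] by simp
    qed (use disj in auto)
    also have "\<dots> \<le> measure lebesgue (cbox (lo - r *\<^sub>R One) (lo + (2 * r) *\<^sub>R One))"
      using sub Bm by (intro measure_mono_fmeasurable) (auto intro!: sets.finite_UN)
    also have "\<dots> \<le> (3 * r) ^ ?m"
      using r by (intro meas_cbox_le) (auto simp: inner_diff_left inner_add_left)
    finally have NA: "real N * measure lebesgue A \<le> (3 * r) ^ ?m" .
    have "measure lebesgue A * r \<le> measure lebesgue A * (2 * real N * \<tau>)"
      using Nge \<tau> by (intro mult_left_mono) (auto simp: field_simps)
    also have "\<dots> = 2 * \<tau> * (real N * measure lebesgue A)" by (simp add: algebra_simps)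
    also have "\<dots> \<le> 2 * \<tau> * (3 * r) ^ ?m" using NA \<tau> by (intro mult_left_mono) auto
    also have "\<dots> = (2 * 3 ^ ?m * r ^ (?m - 1) * \<tau>) * r" unfolding power_mult_distrib rm by (simp add: algebra_simps)
    finally show ?thesis using r by simp
  qed
qed

lemma ivt_conn:
  fixes f :: "'a::topological_space \<Rightarrow> real"
  assumes "connected S" "continuous_on S f" "a \<in> S" "b \<in> S" "f a \<le> 0" "0 \<le> f b"
  shows "\<exists>z\<in>S. f z = 0"
proof -
  have "connected (f ` S)" by (rule connected_continuous_image[OF assms(2,1)])
  then have "0 \<in> f ` S"
    unfolding connected_iff_interval using assms(3-6) by blast
  then show ?thesis by auto
qed

lemma sign_const:
  fixes H :: "'a::euclidean_space \<Rightarrow> 'a \<Rightarrow> 'a"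
  assumes dim: "2 \<le> DIM('a)" and Q: "connected Q"
    and cont: "\<And>\<xi>. continuous_on Q (\<lambda>x. H x \<xi> \<bullet> \<xi>)"
    and lin: "\<And>x. x \<in> Q \<Longrightarrow> linear (H x)"
    and big: "\<And>x \<xi>. x \<in> Q \<Longrightarrow> norm \<xi> = 1 \<Longrightarrow> k \<le> \<bar>H x \<xi> \<bullet> \<xi>\<bar>"
    and k: "0 < k"
  shows "(\<forall>x\<in>Q. \<forall>v. k * (norm v)\<^sup>2 \<le> H x v \<bullet> v) \<or> (\<forall>x\<in>Q. \<forall>v. H x v \<bullet> v \<le> - k * (norm v)\<^sup>2)"
proof -
  let ?P = "\<lambda>x \<xi>. H x \<xi> \<bullet> \<xi>"
  have sph: "connected (sphere (0::'a) 1)" using dim by (rule connected_sphere)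
  have contx: "continuous_on (sphere 0 1) (\<lambda>\<xi>. ?P x \<xi>)" if "x \<in> Q" for x
  proof -
    have "bounded_linear (H x)" using lin[OF that] by (simp add: linear_conv_bounded_linear)
    then show ?thesis by (intro continuous_intros linear_continuous_on) auto
  qed
  have trans: "?P x' \<xi>' > 0"
    if hx: "x \<in> Q" "x' \<in> Q" "norm \<xi> = 1" "norm \<xi>' = 1" "?P x \<xi> > 0" for x x' \<xi> \<xi>'
  proof -
    have "?P x \<xi>' > 0"
    proof (rule ccontr)
      assume "\<not> ?P x \<xi>' > 0"
      then obtain z where "z \<in> sphere 0 1" "?P x z = 0"
        using ivt_conn[OF sph contx[OF hx(1)], of \<xi>' \<xi>] hx by auto
      then show False using big[OF hx(1), of z] k by auto
    qed
    show ?thesis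
    proof (rule ccontr)
      assume "\<not> ?P x' \<xi>' > 0"
      then obtain z where "z \<in> Q" "?P z \<xi>' = 0"
        using ivt_conn[OF Q cont[of \<xi>'], of x' x] hx \<open>?P x \<xi>' > 0\<close> by auto
      then show False using big[OF \<open>z \<in> Q\<close> hx(4)] k by auto
    qed
  qed
  have scale: "?P x v = (norm v)\<^sup>2 * ?P x (v /\<^sub>R norm v)" if "x \<in> Q" "v \<noteq> 0" for x v
  proof -
    have "H x v = norm v *\<^sub>R H x (v /\<^sub>R norm v)"
      using linear_scale[OF lin[OF that(1)], of "norm v" "v /\<^sub>R norm v"] that(2) by simp
    then show ?thesis using that(2) by (simp add: power2_eq_square)
  qed
  show ?thesis
  proof (cases "Q = {}")
    case True then show ?thesis by auto
  next
    case False
    then obtain x1 where x1: "x1 \<in> Q" by auto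
    obtain b1 :: 'a where b1: "norm b1 = 1" using norm_Basis SOME_Basis by blast
    have nz: "?P x1 b1 \<noteq> 0" using big[OF x1 b1] k by auto
    show ?thesis
    proof (cases "?P x1 b1 > 0")
      case True
      have "k * (norm v)\<^sup>2 \<le> ?P x v" if "x \<in> Q" for x v
      proof (cases "v = 0")
        case False
        have u: "norm (v /\<^sub>R norm v) = 1" using False by simp
        define q where "q = ?P x (v /\<^sub>R norm v)"
        have "q > 0" using trans[OF x1 that b1 u True] unfolding q_def .
        then have "k \<le> q" using big[OF that u] unfolding q_def by auto
        then have "(norm v)\<^sup>2 * k \<le> (norm v)\<^sup>2 * q" by (intro mult_left_mono) auto
        moreover have "?P x v = (norm v)\<^sup>2 * q" using scale[OF that False] unfolding q_def .
        ultimately show ?thesis by (simp add: mult.commute)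
      qed (use lin[OF that] linear_0 in auto)
      then show ?thesis by blast
    next
      case False
      then have neg: "?P x1 b1 < 0" using nz by auto
      have "?P x v \<le> - k * (norm v)\<^sup>2" if "x \<in> Q" for x v
      proof (cases "v = 0")
        case False
        have u: "norm (v /\<^sub>R norm v) = 1" using False by simp
        define q where "q = ?P x (v /\<^sub>R norm v)"
        have "\<not> q > 0"
        proof
          assume "q > 0"
          from trans[OF that x1 u b1 this[unfolded q_def]] neg show False by simp
        qed
        then have "q \<le> - k" using big[OF that u] unfolding q_def by auto
        then have "(norm v)\<^sup>2 * q \<le> (norm v)\<^sup>2 * (- k)"
          by (intro mult_left_mono) auto
        moreover have "?P x v = (norm v)\<^sup>2 * q" using scale[OF that False] unfolding q_def .
        ultimately show ?thesis by (simp add: mult.commute)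
      qed (use lin[OF that] linear_0 in auto)
      then show ?thesis by blast
    qed
  qed
qed

lemma cube_bound:
  fixes h :: "'a::euclidean_space \<Rightarrow> real" and G :: "'a \<Rightarrow> 'a" and H :: "'a \<Rightarrow> 'a \<Rightarrow> 'a"
  assumes dim: "2 \<le> DIM('a)"
    and r: "0 < r" "r \<le> 1" "real DIM('a) * r \<le> c / 16"
    and D1: "\<And>z. z \<in> cbox lo (lo + r *\<^sub>R One) \<Longrightarrow> (h has_derivative (\<lambda>v. G z \<bullet> v)) (at z within cbox lo (lo + r *\<^sub>R One))"
    and D2: "\<And>z. z \<in> cbox lo (lo + r *\<^sub>R One) \<Longrightarrow> (G has_derivative H z) (at z within cbox lo (lo + r *\<^sub>R One))"
    and Hcont: "\<And>\<xi>. continuous_on (cbox lo (lo + r *\<^sub>R One)) (\<lambda>x. H x \<xi> \<bullet> \<xi>)"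
    and Lh: "\<And>x y. x \<in> cbox lo (lo + r *\<^sub>R One) \<Longrightarrow> y \<in> cbox lo (lo + r *\<^sub>R One) \<Longrightarrow> \<bar>h x - h y\<bar> \<le> d * norm (x - y)"
    and LG: "\<And>x y. x \<in> cbox lo (lo + r *\<^sub>R One) \<Longrightarrow> y \<in> cbox lo (lo + r *\<^sub>R One) \<Longrightarrow> norm (G x - G y) \<le> d * norm (x - y)"
    and cin: "\<And>x \<xi>. x \<in> cbox lo (lo + r *\<^sub>R One) \<Longrightarrow> norm \<xi> = 1 \<Longrightarrow> c * d \<le> \<bar>h x\<bar> + norm (G x) + \<bar>H x \<xi> \<bullet> \<xi>\<bar>"
    and c: "0 < c" and d: "0 < d" and \<delta>: "0 < \<delta>" and small: "16 * \<delta> < c * d"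
  shows "measure lebesgue {x \<in> cbox lo (lo + r *\<^sub>R One). \<bar>h x\<bar> \<le> 2 * \<delta>}
           \<le> (256 * 3 ^ DIM('a) + 32 * real DIM('a) * 2 ^ (DIM('a) + 5)) / (3 * c) * \<delta> / d"
proof -
  let ?Q = "cbox lo (lo + r *\<^sub>R One)"
  let ?m = "DIM('a)"
  define \<kappa> where "\<kappa> = c * d"
  have \<kappa>: "0 < \<kappa>" using c d by (simp add: \<kappa>_def)
  define S where "S = {x \<in> ?Q. \<bar>h x\<bar> \<le> 2 * \<delta>}"
  have loQ: "lo \<in> ?Q" using r by (auto simp: mem_box inner_add_left)
  have cQ: "convex ?Q" "compact ?Q" by auto
  have cont: "continuous_on ?Q h"
    using D1 has_derivative_continuous continuous_on_eq_continuous_within by blast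
  have "compact (?Q \<inter> (?Q \<inter> h -` {-2*\<delta>..2*\<delta>}))"
    by (intro compact_Int_closed cQ(2) continuous_closed_preimage[OF cont]) auto
  moreover have "?Q \<inter> (?Q \<inter> h -` {-2*\<delta>..2*\<delta>}) = S" by (auto simp: S_def abs_le_iff)
  ultimately have cS: "compact S" by simp
  have Sm: "S \<in> sets lebesgue" using lmeasurable_compact[OF cS] by auto
  have diam: "norm (x - y) \<le> c / 16" if "x \<in> ?Q" "y \<in> ?Q" for x y
  proof -
    have "norm (x - y) \<le> (\<Sum>i\<in>Basis. \<bar>(x - y) \<bullet> i\<bar>)" by (rule norm_le_l1)
    also have "\<dots> \<le> (\<Sum>i\<in>(Basis::'a set). r)"
    proof (rule sum_mono)
      fix i :: 'a assume i: "i \<in> Basis"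
      have "lo \<bullet> i \<le> x \<bullet> i \<and> x \<bullet> i \<le> lo \<bullet> i + r" "lo \<bullet> i \<le> y \<bullet> i \<and> y \<bullet> i \<le> lo \<bullet> i + r"
        using that i by (auto simp: mem_box inner_add_left)
      then show "\<bar>(x - y) \<bullet> i\<bar> \<le> r" by (simp add: inner_diff_left abs_le_iff)
    qed
    also have "\<dots> = real ?m * r" by simp
    finally show ?thesis using r by linarith
  qed
  have dc: "d * norm (x - y) \<le> \<kappa> / 16" if "x \<in> ?Q" "y \<in> ?Q" for x y
    using mult_left_mono[OF diam[OF that], of d] d by (simp add: \<kappa>_def)
  define P1 where "P1 = 256 * 3 ^ ?m / (3 * c) * \<delta> / d"
  define P2 where "P2 = 32 * real ?m * 2 ^ (?m + 5) / (3 * c) * \<delta> / d"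
  have P1: "0 \<le> P1" using c d \<delta> by (simp add: P1_def)
  have P2: "0 \<le> P2" using c d \<delta> by (simp add: P2_def)
  have goal_eq: "(256 * 3 ^ ?m + 32 * real ?m * 2 ^ (?m + 5)) / (3 * c) * \<delta> / d = P1 + P2"
    by (simp add: P1_def P2_def add_divide_distrib distrib_right)
  have "measure lebesgue S \<le> P1 + P2"
  proof (cases "\<bar>h lo\<bar> > \<kappa> / 4")
    case True
    have "S = {}"
    proof (rule ccontr)
      assume "S \<noteq> {}"
      then obtain x where x: "x \<in> ?Q" "\<bar>h x\<bar> \<le> 2 * \<delta>" by (auto simp: S_def)
      have "\<bar>h x - h lo\<bar> \<le> \<kappa> / 16" using Lh[OF x(1) loQ] dc[OF x(1) loQ] by linarith
      then show False using True x(2) small \<kappa>_def by linarith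
    qed
    then show ?thesis using P1 P2 by simp
  next
    case False
    note hlo = False
    show ?thesis
    proof (cases "norm (G lo) \<ge> \<kappa> / 4")
      case True
      define e where "e = G lo /\<^sub>R norm (G lo)"
      have Gn: "norm (G lo) > 0" using True \<kappa> by linarith
      have e: "norm e = 1" using Gn by (simp add: e_def)
      have Ge: "G x \<bullet> e \<ge> 3 * \<kappa> / 16" if "x \<in> ?Q" for x
      proof -
        have "G lo \<bullet> e = norm (G lo)" using Gn by (simp add: e_def power2_norm_eq_inner[symmetric] power2_eq_square)
        moreover have "\<bar>(G x - G lo) \<bullet> e\<bar> \<le> norm (G x - G lo)"
          using Cauchy_Schwarz_ineq2[of "G x - G lo" e] e by simp
        moreover have "norm (G x - G lo) \<le> \<kappa> / 16" using LG[OF that loQ] dc[OF that loQ] by linarith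
        ultimately show ?thesis using True by (simp add: inner_diff_left abs_le_iff)
      qed
      define \<tau> where "\<tau> = 128 * \<delta> / (3 * \<kappa>)"
      have \<tau>: "0 < \<tau>" using \<delta> \<kappa> by (simp add: \<tau>_def)
      have "measure lebesgue S \<le> 2 * 3 ^ ?m * r ^ (?m - 1) * \<tau>"
      proof (rule packing[OF Sm _ r(1) \<tau> e])
        show "S \<subseteq> ?Q" by (auto simp: S_def)
        fix x x' s assume xs: "x \<in> S" "x' \<in> S" "\<tau> \<le> s"
        show "x \<noteq> x' + s *\<^sub>R e"
        proof
          assume xe: "x = x' + s *\<^sub>R e"
          have xQ: "x \<in> ?Q" "x' \<in> ?Q" using xs by (auto simp: S_def)
          have "(\<lambda>t. h (x' + t *\<^sub>R (x - x'))) 1 - (\<lambda>t. h (x' + t *\<^sub>R (x - x'))) 0 \<ge> (s * (3 * \<kappa> / 16)) * (1 - 0)"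
          proof (rule mvt_lower[where \<phi>'="\<lambda>t. G (x' + t *\<^sub>R (x - x')) \<bullet> (x - x')"])
            fix t :: real assume t: "t \<in> {0..1}"
            show "((\<lambda>t. h (x' + t *\<^sub>R (x - x'))) has_real_derivative G (x' + t *\<^sub>R (x - x')) \<bullet> (x - x')) (at t within {0..1})"
              by (rule seg_deriv(1)[OF cQ(1) xQ(2,1) D1 D2 t])
            have eq: "G (x' + t *\<^sub>R (x - x')) \<bullet> (x - x') = s * (G (x' + t *\<^sub>R (x - x')) \<bullet> e)"
              using xe by simp
            have g: "3 * \<kappa> / 16 \<le> G (x' + t *\<^sub>R (x - x')) \<bullet> e"
              by (rule Ge[OF seg_in[OF cQ(1) xQ(2,1) t]])
            have "0 \<le> s" using xs(3) \<tau> by simp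
            from mult_left_mono[OF g this]
            show "s * (3 * \<kappa> / 16) \<le> G (x' + t *\<^sub>R (x - x')) \<bullet> (x - x')"
              unfolding eq .
          qed simp
          then have "h x - h x' \<ge> s * (3 * \<kappa> / 16)" by simp
          moreover have "\<tau> * (3 * \<kappa> / 16) \<le> s * (3 * \<kappa> / 16)"
            using xs(3) \<kappa> by (intro mult_right_mono) auto
          moreover have "\<tau> * (3 * \<kappa> / 16) = 8 * \<delta>" using \<kappa> by (simp add: \<tau>_def)
          moreover have "h x - h x' \<le> 4 * \<delta>" using xs by (auto simp: S_def abs_le_iff)
          ultimately show False using \<delta> by linarith
        qed
      qed
      also have "\<dots> \<le> 2 * 3 ^ ?m * 1 * \<tau>"
        using r \<tau> by (intro mult_right_mono mult_left_mono power_le_one) auto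
      also have "\<dots> = P1" by (simp add: P1_def \<tau>_def \<kappa>_def field_simps)
      finally show ?thesis using P2 by linarith
    next
      case False
      have hx: "\<bar>h x\<bar> \<le> 5 * \<kappa> / 16" if "x \<in> ?Q" for x
        using Lh[OF that loQ] dc[OF that loQ] hlo by linarith
      have Gx: "norm (G x) \<le> 5 * \<kappa> / 16" if "x \<in> ?Q" for x
        using LG[OF that loQ] dc[OF that loQ] False norm_triangle_ineq2[of "G x" "G lo"] by linarith
      define k where "k = 3 * \<kappa> / 8"
      have k: "0 < k" using \<kappa> by (simp add: k_def)
      have big: "k \<le> \<bar>H x \<xi> \<bullet> \<xi>\<bar>" if "x \<in> ?Q" "norm \<xi> = 1" for x \<xi>
        using cin[OF that] hx[OF that(1)] Gx[OF that(1)] by (simp add: k_def \<kappa>_def)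
      have lin: "linear (H x)" if "x \<in> ?Q" for x
        using D2[OF that] has_derivative_linear by blast
      have box: "lo \<bullet> i \<le> (lo + r *\<^sub>R One) \<bullet> i \<and> (lo + r *\<^sub>R One) \<bullet> i - lo \<bullet> i \<le> 1" if "i \<in> Basis" for i
        using r that by (simp add: inner_add_left)
      have P2eq: "real ?m * 2 ^ (?m + 5) * (2 * \<delta> - - 2 * \<delta>) / k = P2"
        using c d by (simp add: P2_def k_def \<kappa>_def field_simps)
      have "measure lebesgue S \<le> P2"
      proof -
        from sign_const[OF dim convex_connected[OF cQ(1)] Hcont lin big k]
        show ?thesis
        proof
          assume pos: "\<forall>x\<in>?Q. \<forall>v. k * (norm v)\<^sup>2 \<le> H x v \<bullet> v"
          have "measure lebesgue {x \<in> ?Q. - 2 * \<delta> \<le> h x \<and> h x \<le> 2 * \<delta>} \<le> real ?m * 2 ^ (?m + 5) * (2 * \<delta> - - 2 * \<delta>) / k"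
            using \<delta> pos by (intro convex_piece[OF dim box D1 D2 _ k]) auto
          moreover have "{x \<in> ?Q. - 2 * \<delta> \<le> h x \<and> h x \<le> 2 * \<delta>} = S" by (auto simp: S_def abs_le_iff)
          ultimately show ?thesis using P2eq by simp
        next
          assume neg: "\<forall>x\<in>?Q. \<forall>v. H x v \<bullet> v \<le> - k * (norm v)\<^sup>2"
          have D1': "((\<lambda>x. - h x) has_derivative (\<lambda>v. (- G z) \<bullet> v)) (at z within ?Q)" if "z \<in> ?Q" for z
            using has_derivative_minus[OF D1[OF that]] by simp
          have D2': "((\<lambda>x. - G x) has_derivative (\<lambda>v. - H z v)) (at z within ?Q)" if "z \<in> ?Q" for z
            using has_derivative_minus[OF D2[OF that]] by simp
          have "measure lebesgue {x \<in> ?Q. - 2 * \<delta> \<le> - h x \<and> - h x \<le> 2 * \<delta>} \<le> real ?m * 2 ^ (?m + 5) * (2 * \<delta> - - 2 * \<delta>) / k"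
          proof (rule convex_piece[OF dim box D1' D2' _ k])
            fix z v assume z: "z \<in> ?Q"
            have "H z v \<bullet> v \<le> - k * (norm v)\<^sup>2" using neg z by blast
            then show "k * (norm v)\<^sup>2 \<le> - H z v \<bullet> v" by simp
          qed (use \<delta> in auto)
          moreover have "{x \<in> ?Q. - 2 * \<delta> \<le> - h x \<and> - h x \<le> 2 * \<delta>} = S" by (auto simp: S_def abs_le_iff)
          ultimately show ?thesis using P2eq by simp
        qed
      qed
      then show ?thesis using P1 by linarith
    qed
  qed
  then show ?thesis unfolding goal_eq S_def .
qed

definition Ccore :: "real \<Rightarrow> nat \<Rightarrow> real" where
  "Ccore c m = 16 / c + real (nat \<lceil>16 * real m / c\<rceil>) ^ m * ((256 * 3 ^ m + 32 * real m * 2 ^ (m + 5)) / (3 * c))"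

lemma core:
  fixes h :: "'a::euclidean_space \<Rightarrow> real" and G :: "'a \<Rightarrow> 'a" and H :: "'a \<Rightarrow> 'a \<Rightarrow> 'a"
  assumes dim: "2 \<le> DIM('a)"
    and D1: "\<And>z. z \<in> cbox 0 One \<Longrightarrow> (h has_derivative (\<lambda>v. G z \<bullet> v)) (at z within cbox 0 One)"
    and D2: "\<And>z. z \<in> cbox 0 One \<Longrightarrow> (G has_derivative H z) (at z within cbox 0 One)"
    and Hcont: "\<And>\<xi>. continuous_on (cbox 0 One) (\<lambda>x. H x \<xi> \<bullet> \<xi>)"
    and bG: "\<And>x. x \<in> cbox 0 One \<Longrightarrow> norm (G x) \<le> d"
    and bH: "\<And>x. x \<in> cbox 0 One \<Longrightarrow> onorm (H x) \<le> d"
    and cin: "\<And>x \<xi>. x \<in> cbox 0 One \<Longrightarrow> norm \<xi> = 1 \<Longrightarrow> c * d \<le> \<bar>h x\<bar> + norm (G x) + \<bar>H x \<xi> \<bullet> \<xi>\<bar>"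
    and c: "0 < c" and d: "0 < d" and \<delta>: "0 < \<delta>"
  shows "measure lebesgue {x \<in> cbox 0 One. \<bar>h x\<bar> \<le> 2 * \<delta>} \<le> Ccore c DIM('a) * \<delta> / d"
proof -
  let ?U = "cbox (0::'a) One"
  let ?m = "DIM('a)"
  define P where "P = (256 * 3 ^ ?m + 32 * real ?m * 2 ^ (?m + 5)) / (3 * c)"
  define N where "N = nat \<lceil>16 * real ?m / c\<rceil>"
  have P: "0 \<le> P" using c by (simp add: P_def)
  have Cc: "Ccore c ?m = 16 / c + real N ^ ?m * P" by (simp add: Ccore_def N_def P_def)
  define T where "T = {x \<in> ?U. \<bar>h x\<bar> \<le> 2 * \<delta>}"
  have cU: "convex ?U" "compact ?U" by auto
  have cont: "continuous_on ?U h"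
    using D1 has_derivative_continuous continuous_on_eq_continuous_within by blast
  have "compact (?U \<inter> (?U \<inter> h -` {-2*\<delta>..2*\<delta>}))"
    by (intro compact_Int_closed cU(2) continuous_closed_preimage[OF cont]) auto
  moreover have "?U \<inter> (?U \<inter> h -` {-2*\<delta>..2*\<delta>}) = T" by (auto simp: T_def abs_le_iff)
  ultimately have cT: "compact T" by simp
  have Lh: "\<bar>h x - h y\<bar> \<le> d * norm (x - y)" if "x \<in> ?U" "y \<in> ?U" for x y
  proof -
    have "norm (h x - h y) \<le> d * norm (x - y)"
    proof (rule differentiable_bound[OF cU(1) D1 _ that])
      fix z assume z: "z \<in> ?U"
      show "onorm (\<lambda>v. G z \<bullet> v) \<le> d"
      proof (rule onorm_bound)
        show "0 \<le> d" using d by simp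
        fix v
        have "\<bar>G z \<bullet> v\<bar> \<le> norm (G z) * norm v" by (rule Cauchy_Schwarz_ineq2)
        also have "\<dots> \<le> d * norm v" using bG[OF z] by (intro mult_right_mono) auto
        finally show "norm (G z \<bullet> v) \<le> d * norm v" by simp
      qed
    qed
    then show ?thesis by simp
  qed
  have LG: "norm (G x - G y) \<le> d * norm (x - y)" if "x \<in> ?U" "y \<in> ?U" for x y
    by (rule differentiable_bound[OF cU(1) D2 bH that])
  show ?thesis
  proof (cases "c * d \<le> 16 * \<delta>")
    case True
    have "measure lebesgue T \<le> measure lebesgue ?U"
      using lmeasurable_compact[OF cT] by (intro measure_mono_fmeasurable) (auto simp: T_def)
    also have "\<dots> \<le> 1 ^ ?m" by (intro meas_cbox_le) auto
    also have "\<dots> \<le> 16 / c * \<delta> / d" using True c d by (simp add: field_simps)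
    also have "\<dots> \<le> Ccore c ?m * \<delta> / d"
      unfolding Cc using P c d \<delta> by (intro divide_right_mono mult_right_mono) auto
    finally show ?thesis unfolding T_def .
  next
    case False
    then have small: "16 * \<delta> < c * d" by simp
    have N1: "1 \<le> N"
    proof -
      have "0 < 16 * real ?m / c" using c by simp
      then have "1 \<le> \<lceil>16 * real ?m / c\<rceil>" by (simp add: le_ceiling_iff)
      then show ?thesis unfolding N_def by (simp add: le_nat_iff)
    qed
    define r where "r = 1 / real N"
    have r: "0 < r" "r \<le> 1" using N1 by (auto simp: r_def)
    have rN: "real N * r = 1" using N1 by (simp add: r_def)
    have mr: "real ?m * r \<le> c / 16"
    proof -
      have "16 * real ?m / c \<le> real N" unfolding N_def by linarith
      then have "16 * real ?m \<le> real N * c" using c by (simp add: field_simps)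
      then show ?thesis using N1 c by (simp add: r_def field_simps)
    qed
    define I where "I = (PiE Basis (\<lambda>_. {..<N}) :: ('a \<Rightarrow> nat) set)"
    define lo where "lo p = (\<Sum>i\<in>Basis. (real (p i) * r) *\<^sub>R i)" for p :: "'a \<Rightarrow> nat"
    define Q where "Q p = cbox (lo p) (lo p + r *\<^sub>R One)" for p
    have loi: "lo p \<bullet> i = real (p i) * r" if "i \<in> Basis" for p i
      using that by (simp add: lo_def inner_sum_left inner_Basis if_distrib cong: if_cong)
    have memQ: "x \<in> Q p \<longleftrightarrow> (\<forall>i\<in>Basis. real (p i) * r \<le> x \<bullet> i \<and> x \<bullet> i \<le> real (p i) * r + r)" for x p
      by (auto simp: Q_def mem_box inner_add_left loi)
    have QU: "Q p \<subseteq> ?U" if "p \<in> I" for p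
    proof
      fix x assume x: "x \<in> Q p"
      show "x \<in> ?U" unfolding mem_box
      proof (intro ballI conjI)
        fix i :: 'a assume i: "i \<in> Basis"
        have pi: "p i < N" using that i by (auto simp: I_def PiE_iff)
        have "real (p i) * r + r = real (p i + 1) * r" by (simp add: algebra_simps)
        also have "\<dots> \<le> real N * r" using pi r by (intro mult_right_mono) auto
        finally have "real (p i) * r + r \<le> 1" using rN by simp
        moreover have "real (p i) * r \<le> x \<bullet> i \<and> x \<bullet> i \<le> real (p i) * r + r"
          using x i by (auto simp: memQ)
        moreover have "0 \<le> real (p i) * r" using r by simp
        ultimately have "0 \<le> x \<bullet> i" "x \<bullet> i \<le> 1" by linarith+
        then show "0 \<bullet> i \<le> x \<bullet> i" "x \<bullet> i \<le> One \<bullet> i"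
          using i by auto
      qed
    qed
    have cover: "\<exists>p\<in>I. x \<in> Q p" if x: "x \<in> ?U" for x
    proof -
      define p where "p = restrict (\<lambda>i. min (N - 1) (nat \<lfloor>x \<bullet> i * real N\<rfloor>)) Basis"
      have "p \<in> I" using N1 by (auto simp: p_def I_def restrict_PiE_iff)
      moreover have "x \<in> Q p" unfolding memQ
      proof
        fix i :: 'a assume i: "i \<in> Basis"
        have xi: "0 \<le> x \<bullet> i" "x \<bullet> i \<le> 1" using x i by (auto simp: mem_box)
        define y where "y = x \<bullet> i * real N"
        have y: "0 \<le> y" "y \<le> real N" using xi N1 by (auto simp: y_def mult_left_le_one_le)
        define j where "j = nat \<lfloor>y\<rfloor>"
        have j: "real j \<le> y" "y < real j + 1" using y by (auto simp: j_def)
        have xy: "x \<bullet> i = y * r" using N1 by (simp add: y_def r_def)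
        show "real (p i) * r \<le> x \<bullet> i \<and> x \<bullet> i \<le> real (p i) * r + r"
        proof (cases "j \<le> N - 1")
          case True
          then have pj: "p i = j" using i by (simp add: p_def j_def y_def)
          have "real j * r \<le> y * r" using j r by (intro mult_right_mono) auto
          moreover have "y * r \<le> (real j + 1) * r" using j r by (intro mult_right_mono) auto
          ultimately show ?thesis unfolding xy pj by (simp add: distrib_right)
        next
          case False
          then have "p i = N - 1" using i by (simp add: p_def j_def y_def)
          moreover have "j = N" using False j y by linarith
          then have "y = real N" using j y by linarith
          ultimately show ?thesis unfolding xy using N1 r rN
            by (auto simp: of_nat_diff algebra_simps)
        qed
      qed
      ultimately show ?thesis by blast
    qed
    have Teq: "T = (\<Union>p\<in>I. {x \<in> Q p. \<bar>h x\<bar> \<le> 2 * \<delta>})"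
      using cover QU by (auto simp: T_def)
    have fin: "finite I" by (simp add: I_def finite_PiE)
    have cardI: "card I = N ^ ?m" by (simp add: I_def card_PiE)
    have each: "measure lebesgue {x \<in> Q p. \<bar>h x\<bar> \<le> 2 * \<delta>} \<le> P * \<delta> / d" if p: "p \<in> I" for p
    proof -
      have sub: "Q p \<subseteq> ?U" using QU[OF p] .
      show ?thesis unfolding Q_def P_def
      proof (rule cube_bound[OF dim r mr _ _ _ _ _ _ c d \<delta> small])
        fix z assume "z \<in> cbox (lo p) (lo p + r *\<^sub>R One)"
        then have z: "z \<in> ?U" using sub by (auto simp: Q_def)
        show "(h has_derivative (\<lambda>v. G z \<bullet> v)) (at z within cbox (lo p) (lo p + r *\<^sub>R One))"
          using has_derivative_subset[OF D1[OF z]] sub by (auto simp: Q_def)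
        show "(G has_derivative H z) (at z within cbox (lo p) (lo p + r *\<^sub>R One))"
          using has_derivative_subset[OF D2[OF z]] sub by (auto simp: Q_def)
      next
        fix \<xi> show "continuous_on (cbox (lo p) (lo p + r *\<^sub>R One)) (\<lambda>x. H x \<xi> \<bullet> \<xi>)"
          using continuous_on_subset[OF Hcont] sub by (auto simp: Q_def)
      next
        fix x y assume "x \<in> cbox (lo p) (lo p + r *\<^sub>R One)" "y \<in> cbox (lo p) (lo p + r *\<^sub>R One)"
        then have xy: "x \<in> ?U" "y \<in> ?U" using sub by (auto simp: Q_def)
        show "\<bar>h x - h y\<bar> \<le> d * norm (x - y)" by (rule Lh[OF xy])
        show "norm (G x - G y) \<le> d * norm (x - y)" by (rule LG[OF xy])
      next
        fix x :: 'a and \<xi> :: 'a assume "x \<in> cbox (lo p) (lo p + r *\<^sub>R One)" "norm \<xi> = 1"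
        then show "c * d \<le> \<bar>h x\<bar> + norm (G x) + \<bar>H x \<xi> \<bullet> \<xi>\<bar>"
          using cin sub by (auto simp: Q_def)
      qed
    qed
    have "measure lebesgue T \<le> (\<Sum>p\<in>I. measure lebesgue {x \<in> Q p. \<bar>h x\<bar> \<le> 2 * \<delta>})"
    proof -
      have "{x \<in> Q p. \<bar>h x\<bar> \<le> 2 * \<delta>} = T \<inter> Q p" if "p \<in> I" for p
        using QU[OF that] by (auto simp: T_def)
      then have "\<And>p. p \<in> I \<Longrightarrow> {x \<in> Q p. \<bar>h x\<bar> \<le> 2 * \<delta>} \<in> sets lebesgue"
        using lmeasurable_compact[OF compact_Int_closed[OF cT closed_cbox]] by (auto simp: Q_def)
      then show ?thesis unfolding Teq by (intro measure_UNION_le fin)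
    qed
    also have "\<dots> \<le> (\<Sum>p\<in>I. P * \<delta> / d)" using each by (intro sum_mono)
    also have "\<dots> = real N ^ ?m * P * \<delta> / d" by (simp add: cardI)
    also have "\<dots> \<le> Ccore c ?m * \<delta> / d"
      unfolding Cc using c d \<delta> P by (intro divide_right_mono mult_right_mono) auto
    finally show ?thesis unfolding T_def .
  qed
qed

lemma fubini_step:
  fixes f g :: "'a::euclidean_space \<Rightarrow> real"
  assumes cf: "continuous_on U f" and cg: "continuous_on U g" and U: "compact U" and \<delta>: "0 < \<delta>"
  shows "measure lebesgue ({(x, y). x \<in> U \<and> f x - \<delta> \<le> y \<and> y \<le> f x + \<delta>} \<inter> {(x, y). x \<in> U \<and> g x - \<delta> \<le> y \<and> y \<le> g x + \<delta>})
           \<le> 2 * \<delta> * measure lebesgue {x \<in> U. \<bar>f x - g x\<bar> \<le> 2 * \<delta>}"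
proof -
  define V where "V = {(x, y). x \<in> U \<and> f x - \<delta> \<le> y \<and> y \<le> f x + \<delta>} \<inter> {(x, y). x \<in> U \<and> g x - \<delta> \<le> y \<and> y \<le> g x + \<delta>}"
  define T where "T = {x \<in> U. \<bar>f x - g x\<bar> \<le> 2 * \<delta>}"
  have closedV: "closed V"
  proof -
    let ?S = "U \<times> (UNIV::real set)"
    let ?\<Phi> = "\<lambda>p::'a\<times>real. (f (fst p) - snd p, g (fst p) - snd p)"
    have cf': "continuous_on ?S (\<lambda>p. f (fst p))"
      by (rule continuous_on_compose2[OF cf]) (auto intro: continuous_intros)
    have cg': "continuous_on ?S (\<lambda>p. g (fst p))"
      by (rule continuous_on_compose2[OF cg]) (auto intro: continuous_intros)
    have "continuous_on ?S ?\<Phi>"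
      using cf' cg' by (intro continuous_intros) auto
    moreover have "closed ?S" using compact_imp_closed[OF U] by (intro closed_Times) auto
    ultimately have "closed (?S \<inter> ?\<Phi> -` ({-\<delta>..\<delta>} \<times> {-\<delta>..\<delta>}))"
      by (intro continuous_closed_preimage) (auto intro: closed_Times)
    moreover have "?S \<inter> ?\<Phi> -` ({-\<delta>..\<delta>} \<times> {-\<delta>..\<delta>}) = V" by (auto simp: V_def)
    ultimately show ?thesis by simp
  qed
  have cT: "compact T"
  proof -
    have "continuous_on U (\<lambda>x. f x - g x)" using cf cg by (intro continuous_intros)
    then have "compact (U \<inter> (U \<inter> (\<lambda>x. f x - g x) -` {-2*\<delta>..2*\<delta>}))"
      using U by (intro compact_Int_closed continuous_closed_preimage compact_imp_closed) auto
    moreover have "U \<inter> (U \<inter> (\<lambda>x. f x - g x) -` {-2*\<delta>..2*\<delta>}) = T" by (auto simp: T_def abs_le_iff)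
    ultimately show ?thesis by simp
  qed
  have Tb: "T \<in> sets lborel" using cT by (simp add: borel_compact)
  have Vb: "V \<in> sets lborel" using closedV by (simp add: borel_closed)
  have Tf: "T \<in> fmeasurable lborel" using cT by (rule fmeasurable_compact)
  have "emeasure lborel V = emeasure (lborel \<Otimes>\<^sub>M lborel) V" by (simp add: lborel_prod)
  also have "\<dots> = (\<integral>\<^sup>+x. emeasure lborel (Pair x -` V) \<partial>lborel)"
  proof (rule lborel.emeasure_pair_measure_alt)
    show "V \<in> sets (lborel \<Otimes>\<^sub>M lborel)" using Vb by (simp only: lborel_prod)
  qed
  also have "\<dots> \<le> (\<integral>\<^sup>+x. ennreal (2 * \<delta>) * indicator T x \<partial>lborel)"
  proof (rule nn_integral_mono)
    fix x :: 'a
    show "emeasure lborel (Pair x -` V) \<le> ennreal (2 * \<delta>) * indicator T x"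
    proof (cases "x \<in> T")
      case True
      have "emeasure lborel (Pair x -` V) \<le> emeasure lborel {f x - \<delta> .. f x + \<delta>}"
        by (intro emeasure_mono) (auto simp: V_def)
      also have "\<dots> = ennreal (2 * \<delta>)" using \<delta> by simp
      finally show ?thesis using True by simp
    next
      case False
      have "Pair x -` V = {}" using False by (auto simp: V_def T_def abs_le_iff)
      then show ?thesis by simp
    qed
  qed
  also have "\<dots> = ennreal (2 * \<delta>) * emeasure lborel T" by (rule nn_integral_cmult_indicator[OF Tb])
  also have "\<dots> = ennreal (2 * \<delta> * measure lborel T)"
    using Tf \<delta> by (simp add: emeasure_eq_measure2 ennreal_mult)
  finally have "emeasure lborel V \<le> ennreal (2 * \<delta> * measure lborel T)" .
  then have "measure lborel V \<le> 2 * \<delta> * measure lborel T"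
    unfolding measure_def using \<delta> by (intro enn2real_leI) auto
  then show ?thesis using Vb Tb by (simp add: V_def[symmetric] T_def[symmetric] measure_completion)
qed

lemma uniq_cube:
  fixes \<phi> :: "'a::euclidean_space \<Rightarrow> 'b::real_normed_vector"
  assumes "x \<in> cbox 0 One" "(\<phi> has_derivative A) (at x within cbox 0 One)" "(\<phi> has_derivative B) (at x within cbox 0 One)"
  shows "A = B"
  by (rule frechet_derivative_unique_within_closed_interval[OF _ assms]) auto

lemma inner_fun_eq:
  fixes v w :: "'a::real_inner"
  assumes "(\<lambda>u. v \<bullet> u) = (\<lambda>u. w \<bullet> u)"
  shows "v = w"
proof -
  have "v \<bullet> (v - w) = w \<bullet> (v - w)" using fun_cong[OF assms, of "v - w"] .
  then have "(v - w) \<bullet> (v - w) = 0" by (simp add: inner_diff_left)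
  then show ?thesis by simp
qed

lemma main_step:
  fixes F :: "('a::euclidean_space \<Rightarrow> real) set"
  assumes dim: "2 \<le> DIM('a)"
    and cin: "cinematic unit_cube F K D \<alpha>" and fg: "f \<in> F" "g \<in> F"
    and \<delta>: "0 < \<delta>" "\<delta> \<le> C2_dist unit_cube f g"
  shows "measure lebesgue (vnbhd unit_cube f \<delta> \<inter> vnbhd unit_cube g \<delta>)
           \<le> 2 * Ccore (inverse K) DIM('a) * \<delta>\<^sup>2 / C2_dist unit_cube f g"
proof -
  let ?U = "cbox (0::'a) One"
  let ?h = "\<lambda>z. f z - g z"
  define d where "d = C2_dist unit_cube f g"
  have d: "0 < d" using \<delta> by (simp add: d_def)
  have K: "0 < K" using cin by (simp add: cinematic_def)
  have Cf: "C2_on ?U f" and Cg: "C2_on ?U g"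
    using cin fg by (auto simp: cinematic_def unit_cube_def)
  have cin3: "\<And>\<xi>. norm \<xi> = 1 \<Longrightarrow> inverse K * d \<le> (INF x\<in>?U. \<bar>f x - g x\<bar> + norm (grad_on ?U ?h x) + \<bar>dd2 ?U ?h \<xi> x\<bar>)"
    using cin fg by (auto simp: cinematic_def unit_cube_def d_def)
  have Df: "\<And>x. x \<in> ?U \<Longrightarrow> (f has_derivative (\<lambda>u. grad_on ?U f x \<bullet> u)) (at x within ?U)"
   and DDf: "\<And>x. x \<in> ?U \<Longrightarrow> (grad_on ?U f has_derivative hess_on ?U f x) (at x within ?U)"
   and Hfc: "\<And>i. i \<in> Basis \<Longrightarrow> continuous_on ?U (\<lambda>x. hess_on ?U f x i)"
    using Cf by (auto simp: C2_on_def)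
  have Dg: "\<And>x. x \<in> ?U \<Longrightarrow> (g has_derivative (\<lambda>u. grad_on ?U g x \<bullet> u)) (at x within ?U)"
   and DDg: "\<And>x. x \<in> ?U \<Longrightarrow> (grad_on ?U g has_derivative hess_on ?U g x) (at x within ?U)"
   and Hgc: "\<And>i. i \<in> Basis \<Longrightarrow> continuous_on ?U (\<lambda>x. hess_on ?U g x i)"
    using Cg by (auto simp: C2_on_def)
  have Dh0: "(?h has_derivative (\<lambda>u. (grad_on ?U f x - grad_on ?U g x) \<bullet> u)) (at x within ?U)"
    if "x \<in> ?U" for x
    using has_derivative_diff[OF Df[OF that] Dg[OF that]] by (simp add: inner_diff_left)
  have D1: "(?h has_derivative (\<lambda>u. grad_on ?U ?h x \<bullet> u)) (at x within ?U)" if "x \<in> ?U" for x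
    unfolding grad_on_def
    by (rule someI[where P="\<lambda>v. (?h has_derivative (\<lambda>u. v \<bullet> u)) (at x within ?U)", OF Dh0[OF that]])
  have GH: "grad_on ?U ?h x = grad_on ?U f x - grad_on ?U g x" if "x \<in> ?U" for x
    by (rule inner_fun_eq[OF uniq_cube[OF that D1[OF that] Dh0[OF that]]])
  have D2a: "(grad_on ?U ?h has_derivative (\<lambda>v. hess_on ?U f x v - hess_on ?U g x v)) (at x within ?U)"
    if "x \<in> ?U" for x
  proof (rule has_derivative_transform_within[OF _ zero_less_one that])
    show "((\<lambda>x. grad_on ?U f x - grad_on ?U g x) has_derivative (\<lambda>v. hess_on ?U f x v - hess_on ?U g x v)) (at x within ?U)"
      by (rule has_derivative_diff[OF DDf[OF that] DDg[OF that]])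
    show "\<And>x'. x' \<in> ?U \<Longrightarrow> dist x' x < 1 \<Longrightarrow> grad_on ?U f x' - grad_on ?U g x' = grad_on ?U ?h x'"
      using GH by simp
  qed
  have D2: "(grad_on ?U ?h has_derivative hess_on ?U ?h x) (at x within ?U)" if "x \<in> ?U" for x
    unfolding hess_on_def[of ?U ?h]
    by (rule someI[where P="\<lambda>L. (grad_on ?U ?h has_derivative L) (at x within ?U)", OF D2a[OF that]])
  have HH: "hess_on ?U ?h x = (\<lambda>v. hess_on ?U f x v - hess_on ?U g x v)" if "x \<in> ?U" for x
    by (rule uniq_cube[OF that D2[OF that] D2a[OF that]])
  have linf: "linear (hess_on ?U f x)" if "x \<in> ?U" for x using DDf[OF that] has_derivative_linear by blast
  have ling: "linear (hess_on ?U g x)" if "x \<in> ?U" for x using DDg[OF that] has_derivative_linear by blast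
  have Hcont: "continuous_on ?U (\<lambda>x. hess_on ?U ?h x \<xi> \<bullet> \<xi>)" for \<xi>
  proof -
    have "continuous_on ?U (\<lambda>x. (\<Sum>i\<in>Basis. (\<xi> \<bullet> i) * (hess_on ?U f x i \<bullet> \<xi>)) - (\<Sum>i\<in>Basis. (\<xi> \<bullet> i) * (hess_on ?U g x i \<bullet> \<xi>)))"
      using Hfc Hgc by (intro continuous_intros continuous_on_sum) auto
    moreover have "hess_on ?U ?h x \<xi> \<bullet> \<xi> = (\<Sum>i\<in>Basis. (\<xi> \<bullet> i) * (hess_on ?U f x i \<bullet> \<xi>)) - (\<Sum>i\<in>Basis. (\<xi> \<bullet> i) * (hess_on ?U g x i \<bullet> \<xi>))"
      if "x \<in> ?U" for x
      using HH[OF that] Linear_Algebra.linear_componentwise[OF linf[OF that], of \<xi> \<xi>] Linear_Algebra.linear_componentwise[OF ling[OF that], of \<xi> \<xi>]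
      by (simp add: inner_diff_left)
    ultimately show ?thesis using continuous_on_cong by (smt (verit))
  qed
  have cont_h: "continuous_on ?U ?h"
    using D1 has_derivative_continuous continuous_on_eq_continuous_within by blast
  have cont_G: "continuous_on ?U (grad_on ?U ?h)"
    using D2 has_derivative_continuous continuous_on_eq_continuous_within by blast
  have bdd1: "bdd_above ((\<lambda>x. \<bar>?h x\<bar>) ` ?U)"
    by (intro bounded_imp_bdd_above compact_imp_bounded compact_continuous_image continuous_intros cont_h) auto
  have bdd2: "bdd_above ((\<lambda>x. norm (grad_on ?U ?h x)) ` ?U)"
    by (intro bounded_imp_bdd_above compact_imp_bounded compact_continuous_image continuous_intros cont_G) auto
  have "bdd_above ((\<lambda>x. \<Sum>i\<in>Basis. norm (hess_on ?U f x i - hess_on ?U g x i)) ` ?U)"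
    using Hfc Hgc by (intro bounded_imp_bdd_above compact_imp_bounded compact_continuous_image continuous_intros continuous_on_sum) auto
  then obtain M where M: "\<And>x. x \<in> ?U \<Longrightarrow> (\<Sum>i\<in>Basis. norm (hess_on ?U f x i - hess_on ?U g x i)) \<le> M"
    by (auto simp: bdd_above_def)
  have on3: "onorm (hess_on ?U ?h x) \<le> M" if "x \<in> ?U" for x
  proof -
    have "bounded_linear (hess_on ?U ?h x)" using D2[OF that] has_derivative_bounded_linear by blast
    then have "onorm (hess_on ?U ?h x) \<le> (\<Sum>i\<in>Basis. norm (hess_on ?U ?h x i))" by (rule onorm_componentwise)
    also have "\<dots> = (\<Sum>i\<in>Basis. norm (hess_on ?U f x i - hess_on ?U g x i))" using HH[OF that] by simp
    finally show ?thesis using M[OF that] by linarith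
  qed
  have bdd3: "bdd_above ((\<lambda>x. onorm (hess_on ?U ?h x)) ` ?U)"
    using on3 by (auto simp: bdd_above_def)
  have z: "(0::'a) \<in> ?U" by (simp add: mem_box)
  have dsum: "d = (SUP x\<in>?U. \<bar>?h x\<bar>) + (SUP x\<in>?U. norm (grad_on ?U ?h x)) + (SUP x\<in>?U. onorm (hess_on ?U ?h x))"
    by (simp add: d_def C2_dist_def C2_norm_def unit_cube_def)
  have s1: "0 \<le> (SUP x\<in>?U. \<bar>?h x\<bar>)"
    using cSUP_upper[OF z bdd1] by (meson abs_ge_zero order_trans)
  have s2: "0 \<le> (SUP x\<in>?U. norm (grad_on ?U ?h x))"
    using cSUP_upper[OF z bdd2] by (meson norm_ge_zero order_trans)
  have s3: "0 \<le> (SUP x\<in>?U. onorm (hess_on ?U ?h x))"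
  proof -
    have "bounded_linear (hess_on ?U ?h 0)" using D2[OF z] has_derivative_bounded_linear by blast
    then have "0 \<le> onorm (hess_on ?U ?h 0)" by (rule onorm_pos_le)
    then show ?thesis using cSUP_upper[OF z bdd3] by linarith
  qed
  have bG: "norm (grad_on ?U ?h x) \<le> d" if "x \<in> ?U" for x
    using cSUP_upper[OF that bdd2] s1 s3 dsum by linarith
  have bH: "onorm (hess_on ?U ?h x) \<le> d" if "x \<in> ?U" for x
    using cSUP_upper[OF that bdd3] s1 s2 dsum by linarith
  have cinx: "inverse K * d \<le> \<bar>?h x\<bar> + norm (grad_on ?U ?h x) + \<bar>hess_on ?U ?h x \<xi> \<bullet> \<xi>\<bar>"
    if "x \<in> ?U" "norm \<xi> = 1" for x \<xi>
  proof -
    have "bdd_below ((\<lambda>x. \<bar>f x - g x\<bar> + norm (grad_on ?U ?h x) + \<bar>dd2 ?U ?h \<xi> x\<bar>) ` ?U)"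
      by (rule bdd_belowI2[where m=0]) auto
    from cINF_lower[OF this that(1)] cin3[OF that(2)]
    show ?thesis by (simp add: dd2_def)
  qed
  have core_res: "measure lebesgue {x \<in> ?U. \<bar>f x - g x\<bar> \<le> 2 * \<delta>} \<le> Ccore (inverse K) DIM('a) * \<delta> / d"
    using core[OF dim D1 D2 Hcont bG bH cinx _ d \<delta>(1)] K by simp
  have cf: "continuous_on ?U f" using Df has_derivative_continuous continuous_on_eq_continuous_within by blast
  have cg: "continuous_on ?U g" using Dg has_derivative_continuous continuous_on_eq_continuous_within by blast
  have "measure lebesgue (vnbhd unit_cube f \<delta> \<inter> vnbhd unit_cube g \<delta>)
        \<le> 2 * \<delta> * measure lebesgue {x \<in> ?U. \<bar>f x - g x\<bar> \<le> 2 * \<delta>}"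
    unfolding vnbhd_def unit_cube_def by (rule fubini_step[OF cf cg compact_cbox \<delta>(1)])
  also have "\<dots> \<le> 2 * \<delta> * (Ccore (inverse K) DIM('a) * \<delta> / d)"
    using core_res \<delta> by (intro mult_left_mono) auto
  also have "\<dots> = 2 * Ccore (inverse K) DIM('a) * \<delta>\<^sup>2 / d" by (simp add: power2_eq_square)
  finally show ?thesis unfolding d_def .
qed

theorem lemma1p16:
  fixes K D :: real and \<alpha> :: "real \<Rightarrow> real"
  assumes "DIM('a::euclidean_space) + 1 \<ge> 3"
  shows "\<exists>C>0. \<forall>(F :: ('a \<Rightarrow> real) set) f g \<delta>.
           \<delta> > 0 \<longrightarrow> cinematic unit_cube F K D \<alpha> \<longrightarrow> f \<in> F \<longrightarrow> g \<in> F \<longrightarrow>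
           \<delta> \<le> C2_dist unit_cube f g \<longrightarrow> C2_dist unit_cube f g \<le> 1 \<longrightarrow>
           measure lebesgue (vnbhd unit_cube f \<delta> \<inter> vnbhd unit_cube g \<delta>)
             \<le> C * \<delta>\<^sup>2 / C2_dist unit_cube f g"
proof (cases "K > 0")
  case True
  have dim: "2 \<le> DIM('a)" using assms by simp
  define C where "C = 2 * Ccore (inverse K) DIM('a)"
  have Cpos: "0 < C"
  proof -
    have A: "0 < 16 / inverse K" using True by simp
    have B: "0 \<le> real (nat \<lceil>16 * real DIM('a) / inverse K\<rceil>) ^ DIM('a) *
        ((256 * 3 ^ DIM('a) + 32 * real DIM('a) * 2 ^ (DIM('a) + 5)) / (3 * inverse K))"
      using True by (intro mult_nonneg_nonneg divide_nonneg_nonneg add_nonneg_nonneg zero_le_power of_nat_0_le_iff) auto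
    have "0 < Ccore (inverse K) DIM('a)" unfolding Ccore_def by (rule add_pos_nonneg[OF A B])
    then show ?thesis by (simp add: C_def)
  qed
  show ?thesis
  proof (intro exI[of _ C] conjI allI impI)
    show "0 < C" by (rule Cpos)
    fix F :: "('a \<Rightarrow> real) set" and f g \<delta>
    assume h: "0 < \<delta>" "cinematic unit_cube F K D \<alpha>" "f \<in> F" "g \<in> F"
      "\<delta> \<le> C2_dist unit_cube f g" "C2_dist unit_cube f g \<le> 1"
    show "measure lebesgue (vnbhd unit_cube f \<delta> \<inter> vnbhd unit_cube g \<delta>)
             \<le> C * \<delta>\<^sup>2 / C2_dist unit_cube f g"
      unfolding C_def by (rule main_step[OF dim h(2,3,4,1,5)])
  qed
next
  case False
  show ?thesis by (rule exI[of _ 1]) (use False in \<open>auto simp: cinematic_def\<close>)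
qed

end
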